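(* Let $N_1, N_2$ be positive integers and consider the Markov chain $(Z^{(t)})_{t\ge 0}$ on $[0,1]$ defined by $Z^{(t)} = B_1^{(t)} (1 - B_2^{(t)}) Z^{(t-1)} + B_2^{(t)}$ for $t \geq 1$, where $B_1^{(t)} \sim \operatorname{Beta}(N_1,1)$ and $B_2^{(t)}\sim\operatorname{Beta}(1,N_2)$, $t=1,2,\dots$, are all mutually independent and independent of $Z^{(0)}$. Let $P$ be its transition kernel and let $\pi = \operatorname{Beta}(N_1+1, N_2)$ (the stationary distribution of $P$). Then for every $z \in [0,1]$ and every integer $t \ge 0$, \[ \lvert\mathbb E Z - z \rvert \leq \mathcal W_1 (P^t(z, \cdot), \pi)\bigg/ \bigg(\frac{N_1}{N_1 + 1} \cdot \frac{N_2}{N_2 + 1}\bigg)^t \leq \mathbb E\lvert Z - z \rvert, \] where $Z\sim \operatorname{Beta}(N_1 + 1, N_2)$.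
   Context: $\operatorname{Beta}(a,b)$ denotes the Beta distribution on $[0,1]$ with density proportional to $x^{a-1}(1-x)^{b-1}$. $\mathcal W_1$ denotes the Wasserstein-1 distance between probability measures on $[0,1]$ (with the usual metric $|x-y|$). $P^t(z,\cdot)$ is the law of $Z^{(t)}$ when $Z^{(0)} = z$. *)

theory Defs
  imports "HOL-Probability.Probability"
begin

definition beta_density :: "real \<Rightarrow> real \<Rightarrow> real \<Rightarrow> real" where
  "beta_density a b x =
     indicator {0<..<1} x * x powr (a - 1) * (1 - x) powr (b - 1) / Beta a b"

definition beta_measure :: "real \<Rightarrow> real \<Rightarrow> real measure" where
  "beta_measure a b = density lborel (\<lambda>x. ennreal (beta_density a b x))"

definition chain_step :: "nat \<Rightarrow> nat \<Rightarrow> real \<Rightarrow> real measure" where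
  "chain_step N1 N2 z =
     distr (beta_measure (real N1) 1 \<Otimes>\<^sub>M beta_measure 1 (real N2)) lborel
           (\<lambda>(b1, b2). b1 * (1 - b2) * z + b2)"

fun chain_kernel :: "nat \<Rightarrow> nat \<Rightarrow> nat \<Rightarrow> real \<Rightarrow> real measure" where
  "chain_kernel N1 N2 0 z = return lborel z"
| "chain_kernel N1 N2 (Suc t) z = chain_kernel N1 N2 t z \<bind> chain_step N1 N2"

definition couplings :: "real measure \<Rightarrow> real measure \<Rightarrow> (real \<times> real) measure set" where
  "couplings \<mu> \<nu> = {\<gamma>. sets \<gamma> = sets (borel \<Otimes>\<^sub>M borel) \<and> prob_space \<gamma> \<and>
       distr \<gamma> borel fst = distr \<mu> borel (\<lambda>x. x) \<and> distr \<gamma> borel snd = distr \<nu> borel (\<lambda>x. x)}"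

definition wasserstein1 :: "real measure \<Rightarrow> real measure \<Rightarrow> ennreal" where
  "wasserstein1 \<mu> \<nu> = (INF \<gamma> \<in> couplings \<mu> \<nu>. \<integral>\<^sup>+ p. ennreal \<bar>fst p - snd p\<bar> \<partial>\<gamma>)"

end

theory Submission
  imports Defs
begin


lemma poly_tail_integral:
  fixes w :: real and m :: nat
  assumes "w \<le> 1" "m \<ge> 1"
  shows "(\<integral>\<^sup>+ y. ennreal (indicator {w<..<1} y * (1 - y) ^ (m - 1)) \<partial>lborel) = ennreal ((1 - w) ^ m / m)"
proof -
  have d: "((\<lambda>y. - ((1 - y) ^ m / m)) has_real_derivative (1 - y) ^ (m - 1)) (at y within {w..1})" for y
  proof -
    have "((\<lambda>y. - ((1 - y) ^ m / m)) has_real_derivative - (real m * (1 - y) ^ (m - 1) * (0 - 1) / m)) (at y within {w..1})"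
      using assms by (intro derivative_eq_intros) auto
    moreover have "- (real m * (1 - y) ^ (m - 1) * (0 - 1) / m) = (1 - y) ^ (m - 1)"
      using assms(2) by (simp add: field_simps)
    ultimately show ?thesis by simp
  qed
  have "((\<lambda>y. (1 - y) ^ (m - 1)) has_integral (- ((1 - 1) ^ m / m) - - ((1 - w) ^ m / m))) {w..1}"
    using assms d by (intro fundamental_theorem_of_calculus) (auto simp: has_real_derivative_iff_has_vector_derivative[symmetric])
  then have "((\<lambda>y. (1 - y) ^ (m - 1)) has_integral ((1 - w) ^ m / m)) {w<..<1}"
    using assms by (simp add: has_integral_Icc_iff_Ioo power_0_left)
  then have "((\<lambda>y. indicator {w<..<1} y * (1 - y) ^ (m - 1)) has_integral ((1 - w) ^ m / m)) UNIV"
  proof -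
    have eq: "(\<lambda>y. indicator {w<..<1} y * (1 - y) ^ (m - 1)) = (\<lambda>y. if y \<in> {w<..<1} then (1 - y) ^ (m - 1) else (0::real))"
      by (auto simp: indicator_def fun_eq_iff)
    show ?thesis unfolding eq has_integral_restrict_UNIV by fact
  qed
  then show ?thesis
    by (subst nn_integral_has_integral_lborel[where I = "(1 - w) ^ m / m"]) (auto simp: indicator_def)
qed

lemma prod_kernel_integral:
  fixes n m :: nat and c w :: real
  assumes n: "n \<ge> 1" and m: "m \<ge> 1" and c: "c \<ge> 0"
  shows "(\<integral>\<^sup>+ y. ennreal (c * indicator {0<..<1} y * y ^ n * (1 - y) ^ (m - 1) *
             (real n * indicator {0<..<1} (w / y) * (w / y) ^ (n - 1)) / y) \<partial>lborel)
         = ennreal (c * n / m * indicator {0<..<1} w * w ^ (n - 1) * (1 - w) ^ m)"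
proof (cases "w \<in> {0<..<1}")
  case True
  have eq: "c * indicator {0<..<1} y * y ^ n * (1 - y) ^ (m - 1) *
             (real n * indicator {0<..<1} (w / y) * (w / y) ^ (n - 1)) / y
        = (c * n * w ^ (n - 1)) * (indicator {w<..<1} y * (1 - y) ^ (m - 1))" for y
  proof (cases "y \<in> {w<..<1}")
    case True2: True
    have y: "y > 0" using True True2 by auto
    have wy: "w / y \<in> {0<..<1}" using True True2 by (auto simp: field_simps)
    have "y ^ n = y ^ (n - 1) * y" using n by (metis Suc_diff_le diff_Suc_1 mult.commute power_Suc)
    then show ?thesis using True2 wy y by (simp add: power_divide field_simps)
  next
    case False
    then have "y \<notin> {0<..<1} \<or> w / y \<notin> {0<..<1}" using True
      by (auto simp: field_simps)
    moreover have r: "indicator {w<..<1} y = (0::real)" using False by simp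
    ultimately show ?thesis
    proof (elim disjE)
      assume "y \<notin> {0<..<1}"
      then have i: "indicator {0<..<1} y = (0::real)" by simp
      show ?thesis by (simp only: i r mult_zero_left mult_zero_right div_0)
    next
      assume "w / y \<notin> {0<..<1}"
      then have i: "indicator {0<..<1} (w / y) = (0::real)" by simp
      show ?thesis by (simp only: i r mult_zero_left mult_zero_right div_0)
    qed
  qed
  have "(\<integral>\<^sup>+ y. ennreal (c * indicator {0<..<1} y * y ^ n * (1 - y) ^ (m - 1) *
             (real n * indicator {0<..<1} (w / y) * (w / y) ^ (n - 1)) / y) \<partial>lborel)
      = (\<integral>\<^sup>+ y. ennreal (c * n * w ^ (n - 1)) * ennreal (indicator {w<..<1} y * (1 - y) ^ (m - 1)) \<partial>lborel)"
  proof (intro nn_integral_cong)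
    fix y :: real
    have "0 \<le> indicator {w<..<1} y * (1 - y) ^ (m - 1)"
      by (cases "y \<in> {w<..<1}") auto
    moreover have "0 \<le> c * n * w ^ (n - 1)" using True c by auto
    ultimately show "ennreal (c * indicator {0<..<1} y * y ^ n * (1 - y) ^ (m - 1) *
             (real n * indicator {0<..<1} (w / y) * (w / y) ^ (n - 1)) / y) = 
      ennreal (c * n * w ^ (n - 1)) * ennreal (indicator {w<..<1} y * (1 - y) ^ (m - 1))"
      by (subst eq, subst ennreal_mult) auto
  qed
  also have "\<dots> = ennreal (c * n * w ^ (n - 1)) * ennreal ((1 - w) ^ m / m)"
  proof -
    have pt: "(\<integral>\<^sup>+ y. ennreal (indicator {w<..<1} y * (1 - y) ^ (m - 1)) \<partial>lborel) = ennreal ((1 - w) ^ m / m)"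
      using True m by (intro poly_tail_integral) auto
    show ?thesis
      by (subst nn_integral_cmult) (measurable, simp only: pt)
  qed
  also have "\<dots> = ennreal (c * n / m * indicator {0<..<1} w * w ^ (n - 1) * (1 - w) ^ m)"
    using True c by (simp add: ennreal_mult[symmetric])
  finally show ?thesis .
next
  case False
  have "c * indicator {0<..<1} y * y ^ n * (1 - y) ^ (m - 1) *
             (real n * indicator {0<..<1} (w / y) * (w / y) ^ (n - 1)) / y = 0" (is "?e y = 0") for y
  proof (cases "y \<in> {0<..<1}")
    case True
    then have "w / y \<notin> {0<..<1}" using False
      by (auto simp: field_simps)
    then show ?thesis by simp
  qed simp
  then have "(\<lambda>y. ennreal (?e y)) = (\<lambda>y. 0)" by (intro ext) (simp only: ennreal_0)
  then show ?thesis using False by simp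
qed

lemma prod_law:
  fixes n m :: nat and c :: real and h :: "real \<Rightarrow> ennreal"
  assumes n: "n \<ge> 1" and m: "m \<ge> 1" and c: "c \<ge> 0" and h[measurable]: "h \<in> borel_measurable borel"
  shows "(\<integral>\<^sup>+ y. \<integral>\<^sup>+ u. ennreal (c * indicator {0<..<1} y * y ^ n * (1 - y) ^ (m - 1) *
              (real n * indicator {0<..<1} u * u ^ (n - 1))) * h (u * y) \<partial>lborel \<partial>lborel)
       = (\<integral>\<^sup>+ w. ennreal (c * n / m * indicator {0<..<1} w * w ^ (n - 1) * (1 - w) ^ m) * h w \<partial>lborel)"
proof -
  define gY where "gY y = c * indicator {0<..<1} y * y ^ n * (1 - y) ^ (m - 1)" for y :: real
  define gU where "gU u = real n * indicator {0<..<1} u * u ^ (n - 1)" for u :: real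
  define K where "K y w = gY y * gU (w / y) / y" for y w :: real
  have [measurable]: "gY \<in> borel_measurable borel" "gU \<in> borel_measurable borel"
    unfolding gY_def[abs_def] gU_def[abs_def] by measurable
  have Km[measurable]: "(\<lambda>(y, w). K y w) \<in> borel_measurable (lborel \<Otimes>\<^sub>M lborel)"
    unfolding K_def by measurable
  have gU0: "gU u \<ge> 0" for u unfolding gU_def by (cases "u \<in> {0<..<1}") auto
  have gY0: "gY y \<ge> 0" for y unfolding gY_def using c by (cases "y \<in> {0<..<1}") auto
  have step1: "(\<integral>\<^sup>+ u. ennreal (gY y * gU u) * h (u * y) \<partial>lborel) = (\<integral>\<^sup>+ w. ennreal (K y w) * h w \<partial>lborel)" for y
  proof (cases "y \<in> {0<..<1}")
    case True
    then have y: "y > 0" by auto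
    have "(\<integral>\<^sup>+ w. ennreal (K y w) * h w \<partial>lborel) = ennreal \<bar>y\<bar> * (\<integral>\<^sup>+ u. ennreal (K y (0 + y * u)) * h (0 + y * u) \<partial>lborel)"
      using y by (intro nn_integral_real_affine) (auto simp: K_def)
    also have "\<dots> = (\<integral>\<^sup>+ u. ennreal y * (ennreal (K y (y * u)) * h (y * u)) \<partial>lborel)"
      using y by (subst nn_integral_cmult) (auto simp: K_def)
    also have "\<dots> = (\<integral>\<^sup>+ u. ennreal (gY y * gU u) * h (u * y) \<partial>lborel)"
    proof (intro nn_integral_cong)
      fix u :: real
      have "ennreal y * ennreal (K y (y * u)) = ennreal (y * K y (y * u))"
        using y gY0 gU0 by (subst ennreal_mult) (auto simp: K_def)
      also have "y * K y (y * u) = gY y * gU u" using y by (simp add: K_def)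
      finally show "ennreal y * (ennreal (K y (y * u)) * h (y * u)) = ennreal (gY y * gU u) * h (u * y)"
        by (simp add: mult.assoc[symmetric] mult.commute)
    qed
    finally show ?thesis ..
  next
    case False
    then have "gY y = 0" unfolding gY_def by simp
    then show ?thesis by (simp add: K_def)
  qed
  have "(\<integral>\<^sup>+ y. \<integral>\<^sup>+ u. ennreal (gY y * gU u) * h (u * y) \<partial>lborel \<partial>lborel)
      = (\<integral>\<^sup>+ y. \<integral>\<^sup>+ w. ennreal (K y w) * h w \<partial>lborel \<partial>lborel)"
    by (simp add: step1)
  also have "\<dots> = (\<integral>\<^sup>+ w. \<integral>\<^sup>+ y. ennreal (K y w) * h w \<partial>lborel \<partial>lborel)"
    by (rule lborel_pair.Fubini'[symmetric]) measurable
  also have "\<dots> = (\<integral>\<^sup>+ w. ennreal (c * n / m * indicator {0<..<1} w * w ^ (n - 1) * (1 - w) ^ m) * h w \<partial>lborel)"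
  proof (intro nn_integral_cong)
    fix w :: real
    have "(\<integral>\<^sup>+ y. ennreal (K y w) * h w \<partial>lborel) = (\<integral>\<^sup>+ y. ennreal (K y w) \<partial>lborel) * h w"
      by (rule nn_integral_multc) (simp add: K_def)
    also have "(\<integral>\<^sup>+ y. ennreal (K y w) \<partial>lborel) = ennreal (c * n / m * indicator {0<..<1} w * w ^ (n - 1) * (1 - w) ^ m)"
      unfolding K_def gY_def gU_def by (rule prod_kernel_integral[OF n m c])
    finally show "(\<integral>\<^sup>+ y. ennreal (K y w) * h w \<partial>lborel) = ennreal (c * n / m * indicator {0<..<1} w * w ^ (n - 1) * (1 - w) ^ m) * h w" .
  qed
  finally show ?thesis unfolding gY_def gU_def .
qed



lemma Beta_pos: "a > 0 \<Longrightarrow> b > 0 \<Longrightarrow> Beta a b > (0::real)"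
  unfolding Beta_def by (intro divide_pos_pos mult_pos_pos Gamma_real_pos) auto

lemma beta_density_nonneg: "a > 0 \<Longrightarrow> b > 0 \<Longrightarrow> beta_density a b x \<ge> 0"
  unfolding beta_density_def using Beta_pos[of a b]
  by (cases "x \<in> {0<..<1}") auto

lemma beta_density_measurable[measurable]: "beta_density a b \<in> borel_measurable borel"
  unfolding beta_density_def[abs_def] by measurable

lemma sets_beta_measure[simp, measurable_cong]: "sets (beta_measure a b) = sets borel"
  unfolding beta_measure_def by simp

lemma space_beta_measure[simp]: "space (beta_measure a b) = UNIV"
  unfolding beta_measure_def by simp

lemma prob_space_beta_measure:
  assumes a: "a > 0" and b: "b > 0"
  shows "prob_space (beta_measure a b)"
proof
  have B: "Beta a b > 0" using Beta_pos[OF a b] .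
  have "((\<lambda>t. t powr (a - 1) * (1 - t) powr (b - 1)) has_integral Beta a b) {0<..<1}"
    using has_integral_Beta_real[OF a b] by (simp add: has_integral_Icc_iff_Ioo)
  then have "((\<lambda>t. t powr (a - 1) * (1 - t) powr (b - 1) / Beta a b) has_integral Beta a b / Beta a b) {0<..<1}"
    by (rule has_integral_divide)
  then have "((\<lambda>t. t powr (a - 1) * (1 - t) powr (b - 1) / Beta a b) has_integral 1) {0<..<1}"
    using B by simp
  moreover have "beta_density a b = (\<lambda>t. if t \<in> {0<..<1} then t powr (a - 1) * (1 - t) powr (b - 1) / Beta a b else 0)"
    by (auto simp: beta_density_def fun_eq_iff)
  ultimately have "(beta_density a b has_integral 1) UNIV"
    by (simp only: has_integral_restrict_UNIV)
  then have "(\<integral>\<^sup>+ x. ennreal (beta_density a b x) \<partial>lborel) = ennreal 1"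
    by (intro nn_integral_has_integral_lborel) (auto intro: beta_density_nonneg a b)
  then show "emeasure (beta_measure a b) (space (beta_measure a b)) = 1"
    unfolding beta_measure_def by (simp add: emeasure_density)
qed

lemma Beta_nat_1: "N > 0 \<Longrightarrow> Beta (real N) 1 = 1 / real N"
proof -
  assume "N > 0"
  then obtain k where k: "N = Suc k" by (cases N) auto
  have "Gamma (real N) = fact k" using Gamma_fact[of k] k by (simp add: add.commute)
  moreover have "Gamma (real N + 1) = fact N" using Gamma_fact[of N] by (simp add: add.commute)
  moreover have "(fact k::real) + fact k * real k > 0" by (simp add: add_pos_nonneg)
  ultimately show ?thesis using k by (simp add: Beta_def field_simps)
qed

lemma beta_density_N1:
  assumes "N > 0"
  shows "beta_density (real N) 1 x = real N * indicator {0<..<1} x * x ^ (N - 1)"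
proof (cases "x \<in> {0<..<1}")
  case True
  then have "x powr (real N - 1) = x ^ (N - 1)" using assms by (simp add: powr_realpow[symmetric] of_nat_diff)
  then show ?thesis using True assms by (simp add: beta_density_def Beta_nat_1)
qed (simp add: beta_density_def)

lemma beta_density_1N:
  assumes "N > 0"
  shows "beta_density 1 (real N) x = real N * indicator {0<..<1} x * (1 - x) ^ (N - 1)"
proof (cases "x \<in> {0<..<1}")
  case True
  then have "(1 - x) powr (real N - 1) = (1 - x) ^ (N - 1)" using assms by (simp add: powr_realpow[symmetric] of_nat_diff)
  then show ?thesis using True assms by (simp add: beta_density_def Beta_nat_1 Beta_commute[of 1])
qed (simp add: beta_density_def)

lemma beta_density_pi:
  assumes "N2 > 0"
  shows "beta_density (real N1 + 1) (real N2) x = 1 / Beta (real N1 + 1) (real N2) * indicator {0<..<1} x * x ^ N1 * (1 - x) ^ (N2 - 1)"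
proof (cases "x \<in> {0<..<1}")
  case True
  then have "(1 - x) powr (real N2 - 1) = (1 - x) ^ (N2 - 1)" using assms by (simp add: powr_realpow[symmetric] of_nat_diff)
  moreover have "x powr (real N1 + 1 - 1) = x ^ N1" using True by (simp add: powr_realpow[symmetric])
  ultimately show ?thesis using True assms by (simp add: beta_density_def)
qed (simp add: beta_density_def)



lemma nn_integral_beta:
  assumes [measurable]: "f \<in> borel_measurable borel"
  shows "(\<integral>\<^sup>+ x. f x \<partial>beta_measure a b) = (\<integral>\<^sup>+ x. ennreal (beta_density a b x) * f x \<partial>lborel)"
  unfolding beta_measure_def by (subst nn_integral_density) auto

lemma nn_integral_reflect:
  fixes f :: "real \<Rightarrow> ennreal"
  assumes [measurable]: "f \<in> borel_measurable borel"
  shows "(\<integral>\<^sup>+ x. f x \<partial>lborel) = (\<integral>\<^sup>+ x. f (1 - x) \<partial>lborel)"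
  using nn_integral_real_affine[of f "-1" 1] by simp

lemma ennreal_mult_assoc_helper: "0 \<le> a \<Longrightarrow> 0 \<le> b \<Longrightarrow> ennreal a * (ennreal b * X) = ennreal (a * b) * X"
  by (simp add: ennreal_mult mult.assoc)

lemma indicator_reflect01: "indicator {0<..<1} (1 - x) = (indicator {0<..<1} (x::real) :: real)"
  by (auto simp: indicator_def)

lemma stationary_integral:
  fixes N1 N2 :: nat and g :: "real \<Rightarrow> ennreal"
  assumes N1: "N1 > 0" and N2: "N2 > 0" and g[measurable]: "g \<in> borel_measurable borel"
  shows "(\<integral>\<^sup>+ z. \<integral>\<^sup>+ b. g (fst b * (1 - snd b) * z + snd b) \<partial>(beta_measure (real N1) 1 \<Otimes>\<^sub>M beta_measure 1 (real N2)) \<partial>beta_measure (real N1 + 1) (real N2))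
       = (\<integral>\<^sup>+ x. g x \<partial>beta_measure (real N1 + 1) (real N2))"
proof -
  define c where "c = 1 / Beta (real N1 + 1) (real N2)"
  have c0: "c > 0" unfolding c_def using Beta_pos[of "real N1 + 1" "real N2"] N2 by auto
  define fP where "fP x = c * indicator {0<..<1} x * x ^ N1 * (1 - x) ^ (N2 - 1)" for x :: real
  define fA where "fA x = real N1 * indicator {0<..<1} x * x ^ (N1 - 1)" for x :: real
  define fB where "fB x = real N2 * indicator {0<..<1} x * (1 - x) ^ (N2 - 1)" for x :: real
  have [measurable]: "fP \<in> borel_measurable borel" "fA \<in> borel_measurable borel" "fB \<in> borel_measurable borel"
    unfolding fP_def[abs_def] fA_def[abs_def] fB_def[abs_def] by measurable
  have dP: "beta_density (real N1 + 1) (real N2) x = fP x" for x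
    using beta_density_pi[OF N2, of N1 x] by (simp add: fP_def c_def)
  have dA: "beta_density (real N1) 1 x = fA x" for x
    using beta_density_N1[OF N1, of x] by (simp add: fA_def)
  have dB: "beta_density 1 (real N2) x = fB x" for x
    using beta_density_1N[OF N2, of x] by (simp add: fB_def)
  have fP0: "fP x \<ge> 0" for x unfolding fP_def using c0 by (cases "x \<in> {0<..<1}") auto
  have fA0: "fA x \<ge> 0" for x unfolding fA_def by (cases "x \<in> {0<..<1}") auto
  have fB0: "fB x \<ge> 0" for x unfolding fB_def by (cases "x \<in> {0<..<1}") auto
  interpret Bm: prob_space "beta_measure 1 (real N2)" by (rule prob_space_beta_measure) (use N2 in auto)
  define F3 where "F3 z b1 b2 = ennreal (fP z * fA b1 * fB b2) * g (b1 * (1 - b2) * z + b2)" for z b1 b2 :: real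
  have F3m[measurable (raw)]: "(\<lambda>x. F3 (f1 x) (f2 x) (f3 x)) \<in> borel_measurable M"
    if [measurable]: "f1 \<in> borel_measurable M" "f2 \<in> borel_measurable M" "f3 \<in> borel_measurable M"
    for f1 f2 f3 and M :: "'a measure"
    unfolding F3_def by measurable
  have step1: "(\<integral>\<^sup>+ b. g (fst b * (1 - snd b) * z + snd b) \<partial>(beta_measure (real N1) 1 \<Otimes>\<^sub>M beta_measure 1 (real N2)))
     = (\<integral>\<^sup>+ b1. ennreal (fA b1) * (\<integral>\<^sup>+ b2. ennreal (fB b2) * g (b1 * (1 - b2) * z + b2) \<partial>lborel) \<partial>lborel)" for z
  proof -
    have "(\<integral>\<^sup>+ b. g (fst b * (1 - snd b) * z + snd b) \<partial>(beta_measure (real N1) 1 \<Otimes>\<^sub>M beta_measure 1 (real N2)))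
      = (\<integral>\<^sup>+ b1. \<integral>\<^sup>+ b2. g (b1 * (1 - b2) * z + b2) \<partial>beta_measure 1 (real N2) \<partial>beta_measure (real N1) 1)"
      by (subst Bm.nn_integral_fst[symmetric]) auto
    also have "\<dots> = (\<integral>\<^sup>+ b1. (\<integral>\<^sup>+ b2. ennreal (fB b2) * g (b1 * (1 - b2) * z + b2) \<partial>lborel) \<partial>beta_measure (real N1) 1)"
      by (intro nn_integral_cong) (simp add: nn_integral_beta dB)
    also have "\<dots> = (\<integral>\<^sup>+ b1. ennreal (fA b1) * (\<integral>\<^sup>+ b2. ennreal (fB b2) * g (b1 * (1 - b2) * z + b2) \<partial>lborel) \<partial>lborel)"
      by (subst nn_integral_beta) (auto simp: dA)
    finally show ?thesis .
  qed
  have "(\<integral>\<^sup>+ z. \<integral>\<^sup>+ b. g (fst b * (1 - snd b) * z + snd b) \<partial>(beta_measure (real N1) 1 \<Otimes>\<^sub>M beta_measure 1 (real N2)) \<partial>beta_measure (real N1 + 1) (real N2))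
     = (\<integral>\<^sup>+ z. ennreal (fP z) * (\<integral>\<^sup>+ b1. ennreal (fA b1) * (\<integral>\<^sup>+ b2. ennreal (fB b2) * g (b1 * (1 - b2) * z + b2) \<partial>lborel) \<partial>lborel) \<partial>lborel)"
    by (simp add: step1 nn_integral_beta dP)
  also have "\<dots> = (\<integral>\<^sup>+ z. \<integral>\<^sup>+ b1. \<integral>\<^sup>+ b2. F3 z b1 b2 \<partial>lborel \<partial>lborel \<partial>lborel)"
  proof (intro nn_integral_cong)
    fix z
    have "ennreal (fP z) * (\<integral>\<^sup>+ b1. ennreal (fA b1) * (\<integral>\<^sup>+ b2. ennreal (fB b2) * g (b1 * (1 - b2) * z + b2) \<partial>lborel) \<partial>lborel)
      = (\<integral>\<^sup>+ b1. ennreal (fP z) * (ennreal (fA b1) * (\<integral>\<^sup>+ b2. ennreal (fB b2) * g (b1 * (1 - b2) * z + b2) \<partial>lborel)) \<partial>lborel)"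
      by (subst nn_integral_cmult) auto
    also have "\<dots> = (\<integral>\<^sup>+ b1. \<integral>\<^sup>+ b2. F3 z b1 b2 \<partial>lborel \<partial>lborel)"
    proof (intro nn_integral_cong)
      fix b1
      have "ennreal (fP z) * (ennreal (fA b1) * (\<integral>\<^sup>+ b2. ennreal (fB b2) * g (b1 * (1 - b2) * z + b2) \<partial>lborel))
         = ennreal (fP z * fA b1) * (\<integral>\<^sup>+ b2. ennreal (fB b2) * g (b1 * (1 - b2) * z + b2) \<partial>lborel)"
        using fP0 fA0 by (simp add: ennreal_mult mult.assoc)
      also have "\<dots> = (\<integral>\<^sup>+ b2. ennreal (fP z * fA b1) * (ennreal (fB b2) * g (b1 * (1 - b2) * z + b2)) \<partial>lborel)"
        by (subst nn_integral_cmult) auto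
      also have "\<dots> = (\<integral>\<^sup>+ b2. F3 z b1 b2 \<partial>lborel)"
        unfolding F3_def using fP0 fA0 fB0
        by (intro nn_integral_cong) (simp add: ennreal_mult mult.assoc)
      finally show "ennreal (fP z) * (ennreal (fA b1) * (\<integral>\<^sup>+ b2. ennreal (fB b2) * g (b1 * (1 - b2) * z + b2) \<partial>lborel))
         = (\<integral>\<^sup>+ b2. F3 z b1 b2 \<partial>lborel)" .
    qed
    finally show "ennreal (fP z) * (\<integral>\<^sup>+ b1. ennreal (fA b1) * (\<integral>\<^sup>+ b2. ennreal (fB b2) * g (b1 * (1 - b2) * z + b2) \<partial>lborel) \<partial>lborel)
      = (\<integral>\<^sup>+ b1. \<integral>\<^sup>+ b2. F3 z b1 b2 \<partial>lborel \<partial>lborel)" .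
  qed
  also have "\<dots> = (\<integral>\<^sup>+ z. \<integral>\<^sup>+ b2. \<integral>\<^sup>+ b1. F3 z b1 b2 \<partial>lborel \<partial>lborel \<partial>lborel)"
    by (intro nn_integral_cong lborel_pair.Fubini'[symmetric]) measurable
  also have "\<dots> = (\<integral>\<^sup>+ b2. \<integral>\<^sup>+ z. \<integral>\<^sup>+ b1. F3 z b1 b2 \<partial>lborel \<partial>lborel \<partial>lborel)"
    by (intro lborel_pair.Fubini'[symmetric]) measurable
  also have "\<dots> = (\<integral>\<^sup>+ b2. ennreal (fB b2) * (\<integral>\<^sup>+ w. ennreal (c * N1 / N2 * indicator {0<..<1} w * w ^ (N1 - 1) * (1 - w) ^ N2) * g ((1 - b2) * w + b2) \<partial>lborel) \<partial>lborel)"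
  proof (intro nn_integral_cong)
    fix b2 :: real
    have "(\<integral>\<^sup>+ z. \<integral>\<^sup>+ b1. F3 z b1 b2 \<partial>lborel \<partial>lborel)
       = (\<integral>\<^sup>+ z. \<integral>\<^sup>+ b1. ennreal (fB b2) * (ennreal (fP z * fA b1) * g ((1 - b2) * (b1 * z) + b2)) \<partial>lborel \<partial>lborel)"
      unfolding F3_def using fP0 fA0 fB0
      by (intro nn_integral_cong) (simp add: ennreal_mult' mult_ac algebra_simps)
    also have "\<dots> = (\<integral>\<^sup>+ z. ennreal (fB b2) * \<integral>\<^sup>+ b1. ennreal (fP z * fA b1) * g ((1 - b2) * (b1 * z) + b2) \<partial>lborel \<partial>lborel)"
      by (intro nn_integral_cong nn_integral_cmult) measurable
    also have "\<dots> = ennreal (fB b2) * (\<integral>\<^sup>+ z. \<integral>\<^sup>+ b1. ennreal (fP z * fA b1) * g ((1 - b2) * (b1 * z) + b2) \<partial>lborel \<partial>lborel)"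
      by (intro nn_integral_cmult) measurable
    also have "(\<integral>\<^sup>+ z. \<integral>\<^sup>+ b1. ennreal (fP z * fA b1) * g ((1 - b2) * (b1 * z) + b2) \<partial>lborel \<partial>lborel)
       = (\<integral>\<^sup>+ w. ennreal (c * N1 / N2 * indicator {0<..<1} w * w ^ (N1 - 1) * (1 - w) ^ N2) * g ((1 - b2) * w + b2) \<partial>lborel)"
      unfolding fP_def fA_def
      by (rule prod_law[of N1 N2 c "\<lambda>w. g ((1 - b2) * w + b2)"]) (use N1 N2 c0 in auto)
    finally show "(\<integral>\<^sup>+ z. \<integral>\<^sup>+ b1. F3 z b1 b2 \<partial>lborel \<partial>lborel) = ennreal (fB b2) * (\<integral>\<^sup>+ w. ennreal (c * N1 / N2 * indicator {0<..<1} w * w ^ (N1 - 1) * (1 - w) ^ N2) * g ((1 - b2) * w + b2) \<partial>lborel)" .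
  qed
  also have "\<dots> = (\<integral>\<^sup>+ b2. \<integral>\<^sup>+ w. ennreal (fB b2 * (c * N1 / N2 * indicator {0<..<1} w * w ^ (N1 - 1) * (1 - w) ^ N2)) * g ((1 - b2) * w + b2) \<partial>lborel \<partial>lborel)"
  proof (intro nn_integral_cong)
    fix b2 :: real
    have nn: "0 \<le> c * N1 / N2 * indicator {0<..<1} w * w ^ (N1 - 1) * (1 - w) ^ N2" for w :: real
      using c0 by (cases "w \<in> {0<..<1}") auto
    show "ennreal (fB b2) * (\<integral>\<^sup>+ w. ennreal (c * N1 / N2 * indicator {0<..<1} w * w ^ (N1 - 1) * (1 - w) ^ N2) * g ((1 - b2) * w + b2) \<partial>lborel)
      = (\<integral>\<^sup>+ w. ennreal (fB b2 * (c * N1 / N2 * indicator {0<..<1} w * w ^ (N1 - 1) * (1 - w) ^ N2)) * g ((1 - b2) * w + b2) \<partial>lborel)"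
      by (subst nn_integral_cmult[symmetric]) (measurable, intro nn_integral_cong ennreal_mult_assoc_helper fB0 nn)
  qed
  also have "\<dots> = (\<integral>\<^sup>+ v. \<integral>\<^sup>+ u. ennreal (c * N1 / N2 * indicator {0<..<1} u * u ^ N2 * (1 - u) ^ (N1 - 1) *
              (real N2 * indicator {0<..<1} v * v ^ (N2 - 1))) * g (1 - v * u) \<partial>lborel \<partial>lborel)"
  proof -
    have "(\<integral>\<^sup>+ b2. \<integral>\<^sup>+ w. ennreal (fB b2 * (c * N1 / N2 * indicator {0<..<1} w * w ^ (N1 - 1) * (1 - w) ^ N2)) * g ((1 - b2) * w + b2) \<partial>lborel \<partial>lborel)
      = (\<integral>\<^sup>+ v. \<integral>\<^sup>+ w. ennreal (fB (1 - v) * (c * N1 / N2 * indicator {0<..<1} w * w ^ (N1 - 1) * (1 - w) ^ N2)) * g ((1 - (1 - v)) * w + (1 - v)) \<partial>lborel \<partial>lborel)"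
      by (rule nn_integral_reflect) measurable
    also have "\<dots> = (\<integral>\<^sup>+ v. \<integral>\<^sup>+ u. ennreal (fB (1 - v) * (c * N1 / N2 * indicator {0<..<1} (1 - u) * (1 - u) ^ (N1 - 1) * (1 - (1 - u)) ^ N2)) * g ((1 - (1 - v)) * (1 - u) + (1 - v)) \<partial>lborel \<partial>lborel)"
      by (intro nn_integral_cong nn_integral_reflect) measurable
    also have "\<dots> = (\<integral>\<^sup>+ v. \<integral>\<^sup>+ u. ennreal (c * N1 / N2 * indicator {0<..<1} u * u ^ N2 * (1 - u) ^ (N1 - 1) *
              (real N2 * indicator {0<..<1} v * v ^ (N2 - 1))) * g (1 - v * u) \<partial>lborel \<partial>lborel)"
    proof (intro nn_integral_cong)
      fix u v :: real
      have e1: "(1 - (1 - v)) * (1 - u) + (1 - v) = 1 - v * u" by (simp add: algebra_simps)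
      have e2: "fB (1 - v) * (c * N1 / N2 * indicator {0<..<1} (1 - u) * (1 - u) ^ (N1 - 1) * (1 - (1 - u)) ^ N2)
         = c * N1 / N2 * indicator {0<..<1} u * u ^ N2 * (1 - u) ^ (N1 - 1) * (real N2 * indicator {0<..<1} v * v ^ (N2 - 1))"
        unfolding fB_def indicator_reflect01 by (simp add: mult_ac)
      show "ennreal (fB (1 - v) * (c * N1 / N2 * indicator {0<..<1} (1 - u) * (1 - u) ^ (N1 - 1) * (1 - (1 - u)) ^ N2)) * g ((1 - (1 - v)) * (1 - u) + (1 - v))
         = ennreal (c * N1 / N2 * indicator {0<..<1} u * u ^ N2 * (1 - u) ^ (N1 - 1) *
              (real N2 * indicator {0<..<1} v * v ^ (N2 - 1))) * g (1 - v * u)" unfolding e1 e2 by (rule refl)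
    qed
    finally show ?thesis .
  qed
  also have "\<dots> = (\<integral>\<^sup>+ u. \<integral>\<^sup>+ v. ennreal (c * N1 / N2 * indicator {0<..<1} u * u ^ N2 * (1 - u) ^ (N1 - 1) *
              (real N2 * indicator {0<..<1} v * v ^ (N2 - 1))) * g (1 - v * u) \<partial>lborel \<partial>lborel)"
    by (rule lborel_pair.Fubini') measurable
  also have "\<dots> = (\<integral>\<^sup>+ w. ennreal (c * N1 / N2 * N2 / N1 * indicator {0<..<1} w * w ^ (N2 - 1) * (1 - w) ^ N1) * g (1 - w) \<partial>lborel)"
    by (rule prod_law[of N2 N1 "c * N1 / N2" "\<lambda>w. g (1 - w)"]) (use N1 N2 c0 in auto)
  also have "\<dots> = (\<integral>\<^sup>+ x. ennreal (c * N1 / N2 * N2 / N1 * indicator {0<..<1} (1 - x) * (1 - x) ^ (N2 - 1) * (1 - (1 - x)) ^ N1) * g (1 - (1 - x)) \<partial>lborel)"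
    by (rule nn_integral_reflect) measurable
  also have "\<dots> = (\<integral>\<^sup>+ x. ennreal (fP x) * g x \<partial>lborel)"
  proof (intro nn_integral_cong)
    fix x :: real
    have "c * N1 / N2 * N2 / N1 = c" using N1 N2 by simp
    then show "ennreal (c * N1 / N2 * N2 / N1 * indicator {0<..<1} (1 - x) * (1 - x) ^ (N2 - 1) * (1 - (1 - x)) ^ N1) * g (1 - (1 - x))
      = ennreal (fP x) * g x"
      unfolding fP_def indicator_reflect01 by (simp add: mult_ac)
  qed
  also have "\<dots> = (\<integral>\<^sup>+ x. g x \<partial>beta_measure (real N1 + 1) (real N2))"
    by (simp add: nn_integral_beta dP)
  finally show ?thesis .
qed



definition Qm :: "nat \<Rightarrow> nat \<Rightarrow> (real \<times> real) measure" where
  "Qm N1 N2 = beta_measure (real N1) 1 \<Otimes>\<^sub>M beta_measure 1 (real N2)"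

definition stepf :: "real \<Rightarrow> real \<times> real \<Rightarrow> real" where
  "stepf z b = fst b * (1 - snd b) * z + snd b"

lemma stepf_measurable[measurable]: "(\<lambda>(z, b). stepf z b) \<in> borel_measurable (borel \<Otimes>\<^sub>M (borel \<Otimes>\<^sub>M borel))"
  unfolding stepf_def by measurable

lemma stepf_measurable'[measurable (raw)]:
  assumes [measurable]: "f \<in> borel_measurable M" "g \<in> M \<rightarrow>\<^sub>M (borel \<Otimes>\<^sub>M borel)"
  shows "(\<lambda>x. stepf (f x) (g x)) \<in> borel_measurable M"
  unfolding stepf_def by measurable

lemma sets_Qm[simp, measurable_cong]: "sets (Qm N1 N2) = sets (borel \<Otimes>\<^sub>M borel)"
  unfolding Qm_def by (intro sets_pair_measure_cong) auto

lemma space_Qm[simp]: "space (Qm N1 N2) = UNIV"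
  using sets_eq_imp_space_eq[OF sets_Qm[of N1 N2]] by (simp add: space_pair_measure)

lemma prob_Qm: "N1 > 0 \<Longrightarrow> N2 > 0 \<Longrightarrow> prob_space (Qm N1 N2)"
  unfolding Qm_def by (intro prob_space_pair prob_space_beta_measure) auto

lemma AE_beta: "AE x in beta_measure a b. x \<in> {0<..<1}"
  unfolding beta_measure_def by (subst AE_density) (auto simp: beta_density_def split: split_indicator intro!: AE_I2)

lemma nn_integral_Qm:
  assumes "N2 > 0" and [measurable]: "F \<in> borel_measurable (borel \<Otimes>\<^sub>M borel)"
  shows "(\<integral>\<^sup>+ b. F b \<partial>Qm N1 N2) = (\<integral>\<^sup>+ b1. \<integral>\<^sup>+ b2. F (b1, b2) \<partial>beta_measure 1 (real N2) \<partial>beta_measure (real N1) 1)"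
proof -
  interpret Bm: prob_space "beta_measure 1 (real N2)" by (rule prob_space_beta_measure) (use assms in auto)
  show ?thesis unfolding Qm_def by (subst Bm.nn_integral_fst[symmetric]) auto
qed

lemma AE_Qm:
  assumes "N1 > 0" "N2 > 0"
  shows "AE b in Qm N1 N2. fst b \<in> {0<..<1} \<and> snd b \<in> {0<..<1}"
proof -
  interpret A: prob_space "beta_measure (real N1) 1" by (rule prob_space_beta_measure) (use assms in auto)
  interpret B: prob_space "beta_measure 1 (real N2)" by (rule prob_space_beta_measure) (use assms in auto)
  interpret AB: pair_sigma_finite "beta_measure (real N1) 1" "beta_measure 1 (real N2)" ..
  show ?thesis unfolding Qm_def
  proof (rule AB.AE_pair_measure)
    show "{x \<in> space (beta_measure (real N1) 1 \<Otimes>\<^sub>M beta_measure 1 (real N2)). fst x \<in> {0<..<1} \<and> snd x \<in> {0<..<1}}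
      \<in> sets (beta_measure (real N1) 1 \<Otimes>\<^sub>M beta_measure 1 (real N2))"
      by measurable
    show "AE x in beta_measure (real N1) 1. AE y in beta_measure 1 (real N2). fst (x, y) \<in> {0<..<1} \<and> snd (x, y) \<in> {0<..<1}"
      using AE_beta[of "real N1" 1]
    proof eventually_elim
      case (elim x)
      show ?case using AE_beta[of 1 "real N2"] by eventually_elim (use elim in auto)
    qed
  qed
qed

lemma poly_integral01:
  "(\<integral>\<^sup>+ x. ennreal (indicator {0<..<1} x * x ^ k) \<partial>lborel) = ennreal (1 / (real k + 1))"
proof -
  have "(\<integral>\<^sup>+ x. ennreal (indicator {0<..<1} x * x ^ k) \<partial>lborel)
     = (\<integral>\<^sup>+ x. ennreal (indicator {0<..<1} (1 - x) * (1 - x) ^ k) \<partial>lborel)"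
    by (rule nn_integral_reflect) measurable
  also have "\<dots> = (\<integral>\<^sup>+ x. ennreal (indicator {0<..<1} x * (1 - x) ^ (Suc k - 1)) \<partial>lborel)"
    by (simp add: indicator_reflect01)
  also have "\<dots> = ennreal ((1 - 0) ^ Suc k / real (Suc k))"
    by (rule poly_tail_integral) auto
  finally show ?thesis by simp
qed

lemma poly_integral01':
  "(\<integral>\<^sup>+ x. ennreal (indicator {0<..<1} x * (1 - x) ^ k) \<partial>lborel) = ennreal (1 / (real k + 1))"
proof -
  have "(\<integral>\<^sup>+ x. ennreal (indicator {0<..<1} x * (1 - x) ^ (Suc k - 1)) \<partial>lborel) = ennreal ((1 - 0) ^ Suc k / real (Suc k))"
    by (rule poly_tail_integral) auto
  then show ?thesis by simp
qed

lemma EA: "N1 > 0 \<Longrightarrow> (\<integral>\<^sup>+ x. ennreal x \<partial>beta_measure (real N1) 1) = ennreal (real N1 / (real N1 + 1))"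
proof -
  assume N1: "N1 > 0"
  have "(\<integral>\<^sup>+ x. ennreal x \<partial>beta_measure (real N1) 1) = (\<integral>\<^sup>+ x. ennreal (beta_density (real N1) 1 x) * ennreal x \<partial>lborel)"
    by (rule nn_integral_beta) measurable
  also have "\<dots> = (\<integral>\<^sup>+ x. ennreal (real N1) * ennreal (indicator {0<..<1} x * x ^ N1) \<partial>lborel)"
  proof (intro nn_integral_cong)
    fix x :: real
    show "ennreal (beta_density (real N1) 1 x) * ennreal x = ennreal (real N1) * ennreal (indicator {0<..<1} x * x ^ N1)"
    proof (cases "x \<in> {0<..<1}")
      case True
      have "x * x ^ (N1 - 1) = x ^ N1" using N1 by (metis Suc_diff_1 power_Suc)
      then show ?thesis using True N1
        by (simp add: beta_density_N1 ennreal_mult[symmetric] mult_ac)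
    qed (simp add: beta_density_N1[OF N1])
  qed
  also have "\<dots> = ennreal (real N1) * ennreal (1 / (real N1 + 1))"
    by (subst nn_integral_cmult) (auto simp: poly_integral01)
  also have "\<dots> = ennreal (real N1 / (real N1 + 1))"
    by (simp add: ennreal_mult[symmetric])
  finally show ?thesis .
qed

lemma EB: "N2 > 0 \<Longrightarrow> (\<integral>\<^sup>+ x. ennreal (1 - x) \<partial>beta_measure 1 (real N2)) = ennreal (real N2 / (real N2 + 1))"
proof -
  assume N2: "N2 > 0"
  have "(\<integral>\<^sup>+ x. ennreal (1 - x) \<partial>beta_measure 1 (real N2)) = (\<integral>\<^sup>+ x. ennreal (beta_density 1 (real N2) x) * ennreal (1 - x) \<partial>lborel)"
    by (rule nn_integral_beta) measurable
  also have "\<dots> = (\<integral>\<^sup>+ x. ennreal (real N2) * ennreal (indicator {0<..<1} x * (1 - x) ^ N2) \<partial>lborel)"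
  proof (intro nn_integral_cong)
    fix x :: real
    show "ennreal (beta_density 1 (real N2) x) * ennreal (1 - x) = ennreal (real N2) * ennreal (indicator {0<..<1} x * (1 - x) ^ N2)"
    proof (cases "x \<in> {0<..<1}")
      case True
      have "(1 - x) ^ (N2 - 1) * (1 - x) = (1 - x) ^ N2" using N2 by (metis Suc_diff_1 power_Suc2)
      then show ?thesis using True N2
        by (simp add: beta_density_1N ennreal_mult[symmetric] mult_ac)
    qed (simp add: beta_density_1N[OF N2])
  qed
  also have "\<dots> = ennreal (real N2) * ennreal (1 / (real N2 + 1))"
    by (subst nn_integral_cmult) (auto simp: poly_integral01')
  also have "\<dots> = ennreal (real N2 / (real N2 + 1))"
    by (simp add: ennreal_mult[symmetric])
  finally show ?thesis .
qed



definition rho :: "nat \<Rightarrow> nat \<Rightarrow> real" where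
  "rho N1 N2 = (real N1 / (real N1 + 1)) * (real N2 / (real N2 + 1))"

lemma rho_pos: "N1 > 0 \<Longrightarrow> N2 > 0 \<Longrightarrow> rho N1 N2 > 0"
  unfolding rho_def by auto

lemma EQ_rho:
  assumes N1: "N1 > 0" and N2: "N2 > 0"
  shows "(\<integral>\<^sup>+ b. ennreal (fst b * (1 - snd b)) \<partial>Qm N1 N2) = ennreal (rho N1 N2)"
proof -
  have "(\<integral>\<^sup>+ b. ennreal (fst b * (1 - snd b)) \<partial>Qm N1 N2)
      = (\<integral>\<^sup>+ b1. \<integral>\<^sup>+ b2. ennreal (b1 * (1 - b2)) \<partial>beta_measure 1 (real N2) \<partial>beta_measure (real N1) 1)"
    by (subst nn_integral_Qm[OF N2]) auto
  also have "\<dots> = (\<integral>\<^sup>+ b1. ennreal b1 * ennreal (real N2 / (real N2 + 1)) \<partial>beta_measure (real N1) 1)"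
  proof (intro nn_integral_cong_AE)
    show "AE b1 in beta_measure (real N1) 1. (\<integral>\<^sup>+ b2. ennreal (b1 * (1 - b2)) \<partial>beta_measure 1 (real N2)) = ennreal b1 * ennreal (real N2 / (real N2 + 1))"
      using AE_beta
    proof (rule AE_mp, intro AE_I2 impI)
      fix b1 :: real assume b1: "b1 \<in> {0<..<1}"
      have "(\<integral>\<^sup>+ b2. ennreal (b1 * (1 - b2)) \<partial>beta_measure 1 (real N2)) = (\<integral>\<^sup>+ b2. ennreal b1 * ennreal (1 - b2) \<partial>beta_measure 1 (real N2))"
        by (intro nn_integral_cong_AE, rule AE_mp[OF AE_beta], intro AE_I2 impI) (use b1 in \<open>simp add: ennreal_mult\<close>)
      also have "\<dots> = ennreal b1 * ennreal (real N2 / (real N2 + 1))"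
        by (subst nn_integral_cmult) (auto simp: EB[OF N2])
      finally show "(\<integral>\<^sup>+ b2. ennreal (b1 * (1 - b2)) \<partial>beta_measure 1 (real N2)) = ennreal b1 * ennreal (real N2 / (real N2 + 1))" .
    qed
  qed
  also have "\<dots> = ennreal (real N1 / (real N1 + 1)) * ennreal (real N2 / (real N2 + 1))"
    by (subst nn_integral_multc) (auto simp: EA[OF N1])
  also have "\<dots> = ennreal (rho N1 N2)"
    by (simp add: rho_def ennreal_mult[symmetric])
  finally show ?thesis .
qed

definition Cb :: "nat \<Rightarrow> nat \<Rightarrow> ennreal" where
  "Cb N1 N2 = (\<integral>\<^sup>+ b. ennreal (snd b) \<partial>Qm N1 N2)"

lemma Cb_le1:
  assumes N1: "N1 > 0" and N2: "N2 > 0"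
  shows "Cb N1 N2 \<le> 1"
proof -
  interpret prob_space "Qm N1 N2" by (rule prob_Qm[OF N1 N2])
  have "Cb N1 N2 \<le> (\<integral>\<^sup>+ b. 1 \<partial>Qm N1 N2)"
    unfolding Cb_def
    by (intro nn_integral_mono_AE, rule AE_mp[OF AE_Qm[OF N1 N2]], intro AE_I2 impI) auto
  then show ?thesis using emeasure_space_1 by simp
qed

lemma EQ_step:
  assumes N1: "N1 > 0" and N2: "N2 > 0" and y: "y \<ge> 0"
  shows "(\<integral>\<^sup>+ b. ennreal (stepf y b) \<partial>Qm N1 N2) = ennreal (rho N1 N2) * ennreal y + Cb N1 N2"
proof -
  have "(\<integral>\<^sup>+ b. ennreal (stepf y b) \<partial>Qm N1 N2)
     = (\<integral>\<^sup>+ b. ennreal (fst b * (1 - snd b)) * ennreal y + ennreal (snd b) \<partial>Qm N1 N2)"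
  proof (intro nn_integral_cong_AE, rule AE_mp[OF AE_Qm[OF N1 N2]], intro AE_I2 impI)
    fix b :: "real \<times> real" assume b: "fst b \<in> {0<..<1} \<and> snd b \<in> {0<..<1}"
    have a0: "fst b * (1 - snd b) \<ge> 0" using b by auto
    have "ennreal (stepf y b) = ennreal (fst b * (1 - snd b) * y) + ennreal (snd b)"
      unfolding stepf_def using a0 b y by (intro ennreal_plus) auto
    also have "ennreal (fst b * (1 - snd b) * y) = ennreal (fst b * (1 - snd b)) * ennreal y"
      using a0 y by (rule ennreal_mult)
    finally show "ennreal (stepf y b) = ennreal (fst b * (1 - snd b)) * ennreal y + ennreal (snd b)" .
  qed
  also have "\<dots> = (\<integral>\<^sup>+ b. ennreal (fst b * (1 - snd b)) * ennreal y \<partial>Qm N1 N2) + Cb N1 N2"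
    unfolding Cb_def by (subst nn_integral_add) auto
  also have "\<dots> = ennreal (rho N1 N2) * ennreal y + Cb N1 N2"
    by (subst nn_integral_multc) (auto simp: EQ_rho[OF N1 N2])
  finally show ?thesis .
qed

lemma EQ_diff:
  assumes N1: "N1 > 0" and N2: "N2 > 0"
  shows "(\<integral>\<^sup>+ b. ennreal \<bar>stepf x b - stepf y b\<bar> \<partial>Qm N1 N2) = ennreal (rho N1 N2) * ennreal \<bar>x - y\<bar>"
proof -
  have "(\<integral>\<^sup>+ b. ennreal \<bar>stepf x b - stepf y b\<bar> \<partial>Qm N1 N2)
     = (\<integral>\<^sup>+ b. ennreal (fst b * (1 - snd b)) * ennreal \<bar>x - y\<bar> \<partial>Qm N1 N2)"
  proof (intro nn_integral_cong_AE)
    show "AE b in Qm N1 N2. ennreal \<bar>stepf x b - stepf y b\<bar> = ennreal (fst b * (1 - snd b)) * ennreal \<bar>x - y\<bar>"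
      using AE_Qm[OF N1 N2]
    proof (rule AE_mp, intro AE_I2 impI)
      fix b :: "real \<times> real" assume b: "fst b \<in> {0<..<1} \<and> snd b \<in> {0<..<1}"
      have "\<bar>stepf x b - stepf y b\<bar> = \<bar>fst b * (1 - snd b) * (x - y)\<bar>"
        by (simp add: stepf_def algebra_simps)
      also have "\<dots> = fst b * (1 - snd b) * \<bar>x - y\<bar>"
        using b by (simp add: abs_mult)
      finally show "ennreal \<bar>stepf x b - stepf y b\<bar> = ennreal (fst b * (1 - snd b)) * ennreal \<bar>x - y\<bar>"
        using b by (simp add: ennreal_mult)
    qed
  qed
  also have "\<dots> = ennreal (rho N1 N2) * ennreal \<bar>x - y\<bar>"
    by (subst nn_integral_multc) (auto simp: EQ_rho[OF N1 N2])
  finally show ?thesis .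
qed

lemma chain_step_eq: "chain_step N1 N2 z = distr (Qm N1 N2) lborel (stepf z)"
  unfolding chain_step_def Qm_def stepf_def by (simp add: case_prod_beta')

lemma Qm_space_prob:
  assumes N1: "N1 > 0" and N2: "N2 > 0"
  shows "Qm N1 N2 \<in> space (prob_algebra (Qm N1 N2))"
  using prob_Qm[OF N1 N2] by (simp add: space_prob_algebra)

lemma chain_step_meas:
  assumes N1: "N1 > 0" and N2: "N2 > 0"
  shows "chain_step N1 N2 \<in> borel \<rightarrow>\<^sub>M prob_algebra lborel"
proof -
  have "(\<lambda>z. distr (Qm N1 N2) lborel (stepf z)) \<in> borel \<rightarrow>\<^sub>M prob_algebra lborel"
    by (rule measurable_distr_prob_space2[where M="Qm N1 N2"])
       (auto intro: measurable_const Qm_space_prob[OF N1 N2])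
  then show ?thesis by (simp add: chain_step_eq[abs_def])
qed

definition Sk :: "nat \<Rightarrow> nat \<Rightarrow> real \<Rightarrow> real measure" where
  "Sk N1 N2 z = distr (Qm N1 N2) borel (stepf z)"

lemma Sk_meas:
  assumes N1: "N1 > 0" and N2: "N2 > 0"
  shows "Sk N1 N2 \<in> borel \<rightarrow>\<^sub>M prob_algebra borel"
  unfolding Sk_def[abs_def]
  by (rule measurable_distr_prob_space2[where M="Qm N1 N2"])
     (auto intro: measurable_const Qm_space_prob[OF N1 N2])

lemma P_space:
  assumes N1: "N1 > 0" and N2: "N2 > 0"
  shows "chain_kernel N1 N2 t z \<in> space (prob_algebra borel)"
proof (induction t)
  case 0
  show ?case by (simp add: space_prob_algebra prob_space_return)
next
  case (Suc t)
  have "sets (chain_kernel N1 N2 t z \<bind> chain_step N1 N2) = sets lborel"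
    by (rule sets_bind'[OF Suc chain_step_meas[OF N1 N2]])
  moreover have "prob_space (chain_kernel N1 N2 t z \<bind> chain_step N1 N2)"
    by (rule prob_space_bind'[OF Suc chain_step_meas[OF N1 N2]])
  ultimately show ?case by (simp add: space_prob_algebra)
qed

lemma sets_P[simp, measurable_cong]:
  assumes N1: "N1 > 0" and N2: "N2 > 0"
  shows "sets (chain_kernel N1 N2 t z) = sets borel"
  using P_space[OF N1 N2, of t z] by (simp add: space_prob_algebra)

lemma prob_P:
  assumes N1: "N1 > 0" and N2: "N2 > 0"
  shows "prob_space (chain_kernel N1 N2 t z)"
  using P_space[OF N1 N2, of t z] by (simp add: space_prob_algebra)

lemma chain_step_meas_P:
  assumes N1: "N1 > 0" and N2: "N2 > 0"
  shows "chain_step N1 N2 \<in> measurable (chain_kernel N1 N2 t z) (subprob_algebra lborel)"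
  using measurable_prob_algebraD[OF chain_step_meas[OF N1 N2]]
  by (subst measurable_cong_sets[OF sets_P[OF N1 N2] refl])



lemma step_in01:
  assumes b: "fst b \<in> {0<..<1} \<and> snd b \<in> {0<..<1}" and y: "y \<in> {0..1::real}"
  shows "stepf y b \<in> {0..1}"
proof -
  have "fst b * y \<le> 1" using b y by (intro mult_le_one) auto
  then have "fst b * y * (1 - snd b) \<le> 1 * (1 - snd b)" using b by (intro mult_right_mono) auto
  then have "fst b * (1 - snd b) * y \<le> 1 - snd b" by (simp add: mult_ac)
  moreover have "fst b * (1 - snd b) * y \<ge> 0" using b y by auto
  moreover have "0 < snd b" "snd b < 1" using b by auto
  moreover have e: "stepf y b = fst b * (1 - snd b) * y + snd b" unfolding stepf_def ..
  ultimately show ?thesis unfolding e atLeastAtMost_iff by linarith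
qed

lemma P_support:
  assumes N1: "N1 > 0" and N2: "N2 > 0" and z: "z \<in> {0..1}"
  shows "AE x in chain_kernel N1 N2 t z. x \<in> {0..1}"
proof (induction t)
  case 0
  show ?case unfolding chain_kernel.simps using z by (subst AE_return) auto
next
  case (Suc t)
  show ?case unfolding chain_kernel.simps
  proof (subst AE_bind[OF chain_step_meas_P[OF N1 N2]])
    show "AE y in chain_kernel N1 N2 t z. AE x in chain_step N1 N2 y. x \<in> {0..1}"
      using Suc
    proof eventually_elim
      case (elim y)
      then have y: "y \<in> {0..1}" .
      have "AE b in Qm N1 N2. stepf y b \<in> {0..1}"
        using AE_Qm[OF N1 N2] by eventually_elim (rule step_in01[OF _ y])
      then show "AE x in chain_step N1 N2 y. x \<in> {0..1}"
        unfolding chain_step_eq by (subst AE_distr_iff) auto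
    qed
  qed measurable
qed

lemma mean_rec:
  assumes N1: "N1 > 0" and N2: "N2 > 0" and z: "z \<in> {0..1}"
  shows "(\<integral>\<^sup>+ x. ennreal x \<partial>chain_kernel N1 N2 (Suc t) z)
       = ennreal (rho N1 N2) * (\<integral>\<^sup>+ x. ennreal x \<partial>chain_kernel N1 N2 t z) + Cb N1 N2"
proof -
  interpret P: prob_space "chain_kernel N1 N2 t z" by (rule prob_P[OF N1 N2])
  have [measurable_cong]: "sets (chain_kernel N1 N2 t z) = sets borel" by (rule sets_P[OF N1 N2])
  have "(\<integral>\<^sup>+ x. ennreal x \<partial>chain_kernel N1 N2 (Suc t) z)
      = (\<integral>\<^sup>+ y. \<integral>\<^sup>+ x. ennreal x \<partial>chain_step N1 N2 y \<partial>chain_kernel N1 N2 t z)"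
    unfolding chain_kernel.simps by (rule nn_integral_bind[OF _ chain_step_meas_P[OF N1 N2]]) measurable
  also have "\<dots> = (\<integral>\<^sup>+ y. ennreal (rho N1 N2) * ennreal y + Cb N1 N2 \<partial>chain_kernel N1 N2 t z)"
  proof (intro nn_integral_cong_AE, rule AE_mp[OF P_support[OF N1 N2 z]], intro AE_I2 impI)
    fix y :: real assume y: "y \<in> {0..1}"
    show "(\<integral>\<^sup>+ x. ennreal x \<partial>chain_step N1 N2 y) = ennreal (rho N1 N2) * ennreal y + Cb N1 N2"
      unfolding chain_step_eq using y by (subst nn_integral_distr) (auto simp: EQ_step[OF N1 N2])
  qed
  also have "\<dots> = (\<integral>\<^sup>+ y. ennreal (rho N1 N2) * ennreal y \<partial>chain_kernel N1 N2 t z) + (\<integral>\<^sup>+ y. Cb N1 N2 \<partial>chain_kernel N1 N2 t z)"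
    by (rule nn_integral_add) auto
  also have "(\<integral>\<^sup>+ y. ennreal (rho N1 N2) * ennreal y \<partial>chain_kernel N1 N2 t z) = ennreal (rho N1 N2) * (\<integral>\<^sup>+ x. ennreal x \<partial>chain_kernel N1 N2 t z)"
    by (rule nn_integral_cmult) auto
  also have "(\<integral>\<^sup>+ y. Cb N1 N2 \<partial>chain_kernel N1 N2 t z) = Cb N1 N2"
    using P.emeasure_space_1 by simp
  finally show ?thesis .
qed

lemma pi_prob:
  assumes N2: "N2 > 0"
  shows "prob_space (beta_measure (real N1 + 1) (real N2))"
  by (rule prob_space_beta_measure) (use N2 in auto)

lemma mean_pi:
  assumes N1: "N1 > 0" and N2: "N2 > 0"
  shows "(\<integral>\<^sup>+ x. ennreal x \<partial>beta_measure (real N1 + 1) (real N2))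
       = ennreal (rho N1 N2) * (\<integral>\<^sup>+ x. ennreal x \<partial>beta_measure (real N1 + 1) (real N2)) + Cb N1 N2"
proof -
  interpret P: prob_space "beta_measure (real N1 + 1) (real N2)" by (rule pi_prob[OF N2])
  have "(\<integral>\<^sup>+ x. ennreal x \<partial>beta_measure (real N1 + 1) (real N2))
     = (\<integral>\<^sup>+ y. \<integral>\<^sup>+ b. ennreal (stepf y b) \<partial>Qm N1 N2 \<partial>beta_measure (real N1 + 1) (real N2))"
    using stationary_integral[OF N1 N2, of ennreal] by (simp add: Qm_def stepf_def)
  also have "\<dots> = (\<integral>\<^sup>+ y. ennreal (rho N1 N2) * ennreal y + Cb N1 N2 \<partial>beta_measure (real N1 + 1) (real N2))"
    by (intro nn_integral_cong_AE, rule AE_mp[OF AE_beta], intro AE_I2 impI) (auto simp: EQ_step[OF N1 N2])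
  also have "\<dots> = (\<integral>\<^sup>+ y. ennreal (rho N1 N2) * ennreal y \<partial>beta_measure (real N1 + 1) (real N2)) + (\<integral>\<^sup>+ y. Cb N1 N2 \<partial>beta_measure (real N1 + 1) (real N2))"
    by (rule nn_integral_add) auto
  also have "(\<integral>\<^sup>+ y. ennreal (rho N1 N2) * ennreal y \<partial>beta_measure (real N1 + 1) (real N2)) = ennreal (rho N1 N2) * (\<integral>\<^sup>+ x. ennreal x \<partial>beta_measure (real N1 + 1) (real N2))"
    by (rule nn_integral_cmult) auto
  also have "(\<integral>\<^sup>+ y. Cb N1 N2 \<partial>beta_measure (real N1 + 1) (real N2)) = Cb N1 N2"
    using P.emeasure_space_1 by simp
  finally show ?thesis .
qed

lemma pi_space:
  assumes N2: "N2 > 0"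
  shows "beta_measure (real N1 + 1) (real N2) \<in> space (prob_algebra borel)"
  using pi_prob[OF N2, of N1] by (simp add: space_prob_algebra)

lemma pi_bind_Sk:
  assumes N1: "N1 > 0" and N2: "N2 > 0"
  shows "beta_measure (real N1 + 1) (real N2) \<bind> Sk N1 N2 = distr (beta_measure (real N1 + 1) (real N2)) borel (\<lambda>x. x)"
proof (rule measure_eqI)
  show "sets (beta_measure (real N1 + 1) (real N2) \<bind> Sk N1 N2) = sets (distr (beta_measure (real N1 + 1) (real N2)) borel (\<lambda>x. x))"
    using sets_bind'[OF pi_space[OF N2] Sk_meas[OF N1 N2]] by simp
  fix A assume "A \<in> sets (beta_measure (real N1 + 1) (real N2) \<bind> Sk N1 N2)"
  then have A[measurable]: "A \<in> sets borel"
    using sets_bind'[OF pi_space[OF N2] Sk_meas[OF N1 N2]] by simp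
  have "emeasure (beta_measure (real N1 + 1) (real N2) \<bind> Sk N1 N2) A
      = (\<integral>\<^sup>+ y. emeasure (Sk N1 N2 y) A \<partial>beta_measure (real N1 + 1) (real N2))"
    by (rule emeasure_bind_prob_algebra[OF pi_space[OF N2] Sk_meas[OF N1 N2] A])
  also have "\<dots> = (\<integral>\<^sup>+ y. \<integral>\<^sup>+ b. indicator A (stepf y b) \<partial>Qm N1 N2 \<partial>beta_measure (real N1 + 1) (real N2))"
  proof (intro nn_integral_cong)
    fix y
    have "emeasure (Sk N1 N2 y) A = (\<integral>\<^sup>+ x. indicator A x \<partial>Sk N1 N2 y)"
      by (rule nn_integral_indicator[symmetric]) (simp add: Sk_def)
    also have "\<dots> = (\<integral>\<^sup>+ b. indicator A (stepf y b) \<partial>Qm N1 N2)"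
      unfolding Sk_def by (subst nn_integral_distr) auto
    finally show "emeasure (Sk N1 N2 y) A = (\<integral>\<^sup>+ b. indicator A (stepf y b) \<partial>Qm N1 N2)" .
  qed
  also have "\<dots> = (\<integral>\<^sup>+ x. indicator A x \<partial>beta_measure (real N1 + 1) (real N2))"
    using stationary_integral[OF N1 N2, of "indicator A"] by (simp add: Qm_def stepf_def)
  also have "\<dots> = emeasure (distr (beta_measure (real N1 + 1) (real N2)) borel (\<lambda>x. x)) A"
    by (subst emeasure_distr) auto
  finally show "emeasure (beta_measure (real N1 + 1) (real N2) \<bind> Sk N1 N2) A = emeasure (distr (beta_measure (real N1 + 1) (real N2)) borel (\<lambda>x. x)) A" .
qed



definition K2 :: "nat \<Rightarrow> nat \<Rightarrow> real \<times> real \<Rightarrow> (real \<times> real) measure" where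
  "K2 N1 N2 p = distr (Qm N1 N2) (borel \<Otimes>\<^sub>M borel) (\<lambda>b. (stepf (fst p) b, stepf (snd p) b))"

lemma K2_meas:
  assumes N1: "N1 > 0" and N2: "N2 > 0"
  shows "K2 N1 N2 \<in> (borel \<Otimes>\<^sub>M borel) \<rightarrow>\<^sub>M prob_algebra (borel \<Otimes>\<^sub>M borel)"
  unfolding K2_def[abs_def]
  by (rule measurable_distr_prob_space2[where M="Qm N1 N2"])
     (auto intro: measurable_const Qm_space_prob[OF N1 N2])

fun gam :: "nat \<Rightarrow> nat \<Rightarrow> real \<Rightarrow> nat \<Rightarrow> (real \<times> real) measure" where
  "gam N1 N2 z 0 = distr (beta_measure (real N1 + 1) (real N2)) (borel \<Otimes>\<^sub>M borel) (\<lambda>y. (z, y))"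
| "gam N1 N2 z (Suc t) = gam N1 N2 z t \<bind> K2 N1 N2"

lemma gam_space:
  assumes N1: "N1 > 0" and N2: "N2 > 0"
  shows "gam N1 N2 z t \<in> space (prob_algebra (borel \<Otimes>\<^sub>M borel))"
proof (induction t)
  case 0
  interpret P: prob_space "beta_measure (real N1 + 1) (real N2)" by (rule pi_prob[OF N2])
  have "prob_space (gam N1 N2 z 0)" unfolding gam.simps
    by (rule P.prob_space_distr) measurable
  then show ?case by (simp add: space_prob_algebra)
next
  case (Suc t)
  have "sets (gam N1 N2 z t \<bind> K2 N1 N2) = sets (borel \<Otimes>\<^sub>M borel)"
    by (rule sets_bind'[OF Suc K2_meas[OF N1 N2]])
  moreover have "prob_space (gam N1 N2 z t \<bind> K2 N1 N2)"
    by (rule prob_space_bind'[OF Suc K2_meas[OF N1 N2]])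
  ultimately show ?case by (simp add: space_prob_algebra)
qed

lemma sets_gam:
  assumes N1: "N1 > 0" and N2: "N2 > 0"
  shows "sets (gam N1 N2 z t) = sets (borel \<Otimes>\<^sub>M borel)"
  using gam_space[OF N1 N2, of z t] by (simp add: space_prob_algebra)

lemma prob_gam:
  assumes N1: "N1 > 0" and N2: "N2 > 0"
  shows "prob_space (gam N1 N2 z t)"
  using gam_space[OF N1 N2, of z t] by (simp add: space_prob_algebra)

lemma space_gam_ne:
  assumes N1: "N1 > 0" and N2: "N2 > 0"
  shows "space (gam N1 N2 z t) \<noteq> {}"
  using prob_space.not_empty[OF prob_gam[OF N1 N2]] .

lemma K2_meas_gam:
  assumes N1: "N1 > 0" and N2: "N2 > 0"
  shows "K2 N1 N2 \<in> measurable (gam N1 N2 z t) (subprob_algebra (borel \<Otimes>\<^sub>M borel))"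
  using measurable_prob_algebraD[OF K2_meas[OF N1 N2]]
  by (subst measurable_cong_sets[OF sets_gam[OF N1 N2] refl])

lemma K2_fst: "distr (K2 N1 N2 p) borel fst = Sk N1 N2 (fst p)"
  unfolding K2_def Sk_def by (subst distr_distr) (auto simp: comp_def)

lemma K2_snd: "distr (K2 N1 N2 p) borel snd = Sk N1 N2 (snd p)"
  unfolding K2_def Sk_def by (subst distr_distr) (auto simp: comp_def)

lemma chain_step_Sk: "distr (chain_step N1 N2 x) borel (\<lambda>x. x) = Sk N1 N2 x"
  unfolding chain_step_eq Sk_def by (subst distr_distr) (auto simp: comp_def)

lemma gam_bind_marg:
  assumes N1: "N1 > 0" and N2: "N2 > 0" and f[measurable]: "f \<in> (borel \<Otimes>\<^sub>M borel) \<rightarrow>\<^sub>M borel"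
    and Kf: "\<And>p. distr (K2 N1 N2 p) borel f = Sk N1 N2 (f p)"
  shows "distr (gam N1 N2 z (Suc t)) borel f = distr (gam N1 N2 z t) borel f \<bind> Sk N1 N2"
proof -
  have [measurable_cong]: "sets (gam N1 N2 z t) = sets (borel \<Otimes>\<^sub>M borel)" by (rule sets_gam[OF N1 N2])
  have "distr (gam N1 N2 z (Suc t)) borel f = gam N1 N2 z t \<bind> (\<lambda>p. distr (K2 N1 N2 p) borel f)"
    unfolding gam.simps
    by (rule distr_bind[OF K2_meas_gam[OF N1 N2] space_gam_ne[OF N1 N2]]) measurable
  also have "\<dots> = gam N1 N2 z t \<bind> (\<lambda>p. Sk N1 N2 (f p))"
    by (simp add: Kf)
  also have "\<dots> = distr (gam N1 N2 z t) borel f \<bind> Sk N1 N2"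
    by (rule bind_distr[symmetric, OF _ measurable_prob_algebraD[OF Sk_meas[OF N1 N2]] space_gam_ne[OF N1 N2]]) measurable
  finally show ?thesis .
qed

lemma P_bind_Sk:
  assumes N1: "N1 > 0" and N2: "N2 > 0"
  shows "distr (chain_kernel N1 N2 (Suc t) z) borel (\<lambda>x. x) = distr (chain_kernel N1 N2 t z) borel (\<lambda>x. x) \<bind> Sk N1 N2"
proof -
  have [measurable_cong]: "sets (chain_kernel N1 N2 t z) = sets borel" by (rule sets_P[OF N1 N2])
  have ne: "space (chain_kernel N1 N2 t z) \<noteq> {}" using prob_space.not_empty[OF prob_P[OF N1 N2]] .
  have "distr (chain_kernel N1 N2 (Suc t) z) borel (\<lambda>x. x) = chain_kernel N1 N2 t z \<bind> (\<lambda>x. distr (chain_step N1 N2 x) borel (\<lambda>x. x))"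
    unfolding chain_kernel.simps
    by (rule distr_bind[OF chain_step_meas_P[OF N1 N2] ne]) measurable
  also have "\<dots> = chain_kernel N1 N2 t z \<bind> Sk N1 N2"
    by (simp add: chain_step_Sk)
  also have "\<dots> = distr (chain_kernel N1 N2 t z) borel (\<lambda>x. x) \<bind> Sk N1 N2"
    by (rule bind_distr[symmetric, OF _ measurable_prob_algebraD[OF Sk_meas[OF N1 N2]] ne]) measurable
  finally show ?thesis .
qed

lemma gam_fst:
  assumes N1: "N1 > 0" and N2: "N2 > 0"
  shows "distr (gam N1 N2 z t) borel fst = distr (chain_kernel N1 N2 t z) borel (\<lambda>x. x)"
proof (induction t)
  case 0
  interpret P: prob_space "beta_measure (real N1 + 1) (real N2)" by (rule pi_prob[OF N2])
  have "distr (gam N1 N2 z 0) borel fst = distr (beta_measure (real N1 + 1) (real N2)) borel (\<lambda>y. z)"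
    unfolding gam.simps by (subst distr_distr) (auto simp: comp_def)
  also have "\<dots> = return borel z" by simp
  also have "\<dots> = distr (chain_kernel N1 N2 0 z) borel (\<lambda>x. x)"
    unfolding chain_kernel.simps by (subst distr_return) auto
  finally show ?case .
next
  case (Suc t)
  show ?case
    using gam_bind_marg[OF N1 N2 _ K2_fst] Suc P_bind_Sk[OF N1 N2] by simp
qed

lemma gam_snd:
  assumes N1: "N1 > 0" and N2: "N2 > 0"
  shows "distr (gam N1 N2 z t) borel snd = distr (beta_measure (real N1 + 1) (real N2)) borel (\<lambda>x. x)"
proof (induction t)
  case 0
  show ?case unfolding gam.simps by (subst distr_distr) (auto simp: comp_def)
next
  case (Suc t)
  have "distr (beta_measure (real N1 + 1) (real N2)) borel (\<lambda>x. x) \<bind> Sk N1 N2 = beta_measure (real N1 + 1) (real N2) \<bind> Sk N1 N2"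
    by (rule bind_distr[OF _ measurable_prob_algebraD[OF Sk_meas[OF N1 N2]]]) (auto simp: prob_space.not_empty[OF pi_prob[OF N2]])
  then show ?case
    using gam_bind_marg[OF N1 N2 _ K2_snd] Suc pi_bind_Sk[OF N1 N2] by simp
qed

lemma gam_cost:
  assumes N1: "N1 > 0" and N2: "N2 > 0"
  shows "(\<integral>\<^sup>+ p. ennreal \<bar>fst p - snd p\<bar> \<partial>gam N1 N2 z t)
       = ennreal (rho N1 N2 ^ t) * (\<integral>\<^sup>+ y. ennreal \<bar>z - y\<bar> \<partial>beta_measure (real N1 + 1) (real N2))"
proof (induction t)
  case 0
  show ?case unfolding gam.simps by (subst nn_integral_distr) auto
next
  case (Suc t)
  have [measurable_cong]: "sets (gam N1 N2 z t) = sets (borel \<Otimes>\<^sub>M borel)" by (rule sets_gam[OF N1 N2])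
  have "(\<integral>\<^sup>+ p. ennreal \<bar>fst p - snd p\<bar> \<partial>gam N1 N2 z (Suc t))
     = (\<integral>\<^sup>+ p. \<integral>\<^sup>+ q. ennreal \<bar>fst q - snd q\<bar> \<partial>K2 N1 N2 p \<partial>gam N1 N2 z t)"
    unfolding gam.simps by (rule nn_integral_bind[OF _ K2_meas_gam[OF N1 N2]]) measurable
  also have "\<dots> = (\<integral>\<^sup>+ p. ennreal (rho N1 N2) * ennreal \<bar>fst p - snd p\<bar> \<partial>gam N1 N2 z t)"
  proof (intro nn_integral_cong)
    fix p :: "real \<times> real"
    show "(\<integral>\<^sup>+ q. ennreal \<bar>fst q - snd q\<bar> \<partial>K2 N1 N2 p) = ennreal (rho N1 N2) * ennreal \<bar>fst p - snd p\<bar>"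
      unfolding K2_def by (subst nn_integral_distr) (auto simp: EQ_diff[OF N1 N2])
  qed
  also have "\<dots> = ennreal (rho N1 N2) * (\<integral>\<^sup>+ p. ennreal \<bar>fst p - snd p\<bar> \<partial>gam N1 N2 z t)"
    by (rule nn_integral_cmult) measurable
  also have "\<dots> = ennreal (rho N1 N2 ^ Suc t) * (\<integral>\<^sup>+ y. ennreal \<bar>z - y\<bar> \<partial>beta_measure (real N1 + 1) (real N2))"
    using rho_pos[OF N1 N2] by (simp add: Suc ennreal_mult mult.assoc)
  finally show ?case .
qed

lemma gam_coupling:
  assumes N1: "N1 > 0" and N2: "N2 > 0"
  shows "gam N1 N2 z t \<in> couplings (chain_kernel N1 N2 t z) (beta_measure (real N1 + 1) (real N2))"
  unfolding couplings_def using sets_gam[OF N1 N2] prob_gam[OF N1 N2] gam_fst[OF N1 N2] gam_snd[OF N1 N2]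
  by auto



lemma ennreal_affine_eq:
  assumes "a \<ge> 0" "x \<ge> 0" "c \<ge> 0" "y \<ge> 0"
    and "ennreal y = ennreal a * ennreal x + ennreal c"
  shows "y = a * x + c"
proof -
  have "ennreal (a * x + c) = ennreal a * ennreal x + ennreal c"
    using assms by (simp add: ennreal_plus ennreal_mult)
  then have "ennreal y = ennreal (a * x + c)" using assms by simp
  then show ?thesis using assms by (subst (asm) ennreal_inj) auto
qed

lemma P_mean_eq:
  assumes N1: "N1 > 0" and N2: "N2 > 0" and z: "z \<in> {0..1}"
  shows "(\<integral>\<^sup>+ x. ennreal x \<partial>chain_kernel N1 N2 t z) = ennreal (\<integral>x. x \<partial>chain_kernel N1 N2 t z)"
    and "(\<integral>x. x \<partial>chain_kernel N1 N2 t z) \<ge> 0"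
proof -
  interpret P: prob_space "chain_kernel N1 N2 t z" by (rule prob_P[OF N1 N2])
  have [measurable_cong]: "sets (chain_kernel N1 N2 t z) = sets borel" by (rule sets_P[OF N1 N2])
  have ae: "AE x in chain_kernel N1 N2 t z. x \<in> {0..1}" by (rule P_support[OF N1 N2 z])
  have b: "AE x in chain_kernel N1 N2 t z. norm x \<le> 1" using ae by eventually_elim auto
  have nn: "AE x in chain_kernel N1 N2 t z. 0 \<le> x" using ae by eventually_elim auto
  have int: "integrable (chain_kernel N1 N2 t z) (\<lambda>x. x)"
    by (rule P.integrable_const_bound[OF b]) simp
  show "(\<integral>\<^sup>+ x. ennreal x \<partial>chain_kernel N1 N2 t z) = ennreal (\<integral>x. x \<partial>chain_kernel N1 N2 t z)"
    by (rule nn_integral_eq_integral[OF int nn])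
  show "(\<integral>x. x \<partial>chain_kernel N1 N2 t z) \<ge> 0"
    by (rule integral_nonneg_AE[OF nn])
qed

lemma pi_mean_eq:
  assumes N2: "N2 > 0"
  shows "(\<integral>\<^sup>+ x. ennreal x \<partial>beta_measure (real N1 + 1) (real N2)) = ennreal (\<integral>x. x \<partial>beta_measure (real N1 + 1) (real N2))"
    and "(\<integral>x. x \<partial>beta_measure (real N1 + 1) (real N2)) \<ge> 0"
proof -
  interpret P: prob_space "beta_measure (real N1 + 1) (real N2)" by (rule pi_prob[OF N2])
  have ae: "AE x in beta_measure (real N1 + 1) (real N2). x \<in> {0<..<1}" by (rule AE_beta)
  have b: "AE x in beta_measure (real N1 + 1) (real N2). norm x \<le> 1" using ae by eventually_elim auto
  have nn: "AE x in beta_measure (real N1 + 1) (real N2). 0 \<le> x" using ae by eventually_elim auto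
  have int: "integrable (beta_measure (real N1 + 1) (real N2)) (\<lambda>x. x)"
    by (rule P.integrable_const_bound[OF b]) simp
  show "(\<integral>\<^sup>+ x. ennreal x \<partial>beta_measure (real N1 + 1) (real N2)) = ennreal (\<integral>x. x \<partial>beta_measure (real N1 + 1) (real N2))"
    by (rule nn_integral_eq_integral[OF int nn])
  show "(\<integral>x. x \<partial>beta_measure (real N1 + 1) (real N2)) \<ge> 0"
    by (rule integral_nonneg_AE[OF nn])
qed

lemma means_rel:
  assumes N1: "N1 > 0" and N2: "N2 > 0" and z: "z \<in> {0..1}"
  shows "(\<integral>x. x \<partial>chain_kernel N1 N2 t z) - (\<integral>x. x \<partial>beta_measure (real N1 + 1) (real N2))
       = rho N1 N2 ^ t * (z - (\<integral>x. x \<partial>beta_measure (real N1 + 1) (real N2)))"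
proof -
  define cb where "cb = enn2real (Cb N1 N2)"
  have Cb: "Cb N1 N2 = ennreal cb" "cb \<ge> 0"
    unfolding cb_def using Cb_le1[OF N1 N2] by (auto simp: ennreal_enn2real_if top_unique)
  define mp where "mp = (\<integral>x. x \<partial>beta_measure (real N1 + 1) (real N2))"
  have rho0: "rho N1 N2 \<ge> 0" using rho_pos[OF N1 N2] by simp
  have mp: "mp = rho N1 N2 * mp + cb"
    using mean_pi[OF N1 N2] pi_mean_eq[OF N2, of N1] Cb rho0
    by (intro ennreal_affine_eq) (auto simp: mp_def)
  show ?thesis unfolding mp_def[symmetric]
  proof (induction t)
    case 0
    have "(\<integral>x. x \<partial>chain_kernel N1 N2 0 z) = z" by (simp add: integral_return)
    then show ?case by simp
  next
    case (Suc t)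
    have "(\<integral>x. x \<partial>chain_kernel N1 N2 (Suc t) z) = rho N1 N2 * (\<integral>x. x \<partial>chain_kernel N1 N2 t z) + cb"
      using mean_rec[OF N1 N2 z, of t] P_mean_eq[OF N1 N2 z, of "Suc t"] P_mean_eq[OF N1 N2 z, of t] Cb rho0
      by (intro ennreal_affine_eq) auto
    then have "(\<integral>x. x \<partial>chain_kernel N1 N2 (Suc t) z) - mp = rho N1 N2 * ((\<integral>x. x \<partial>chain_kernel N1 N2 t z) - mp)"
      using mp by (simp add: algebra_simps)
    then show ?case using Suc by simp
  qed
qed



lemma coupling_lower:
  assumes N1: "N1 > 0" and N2: "N2 > 0" and z: "z \<in> {0..1}"
    and g: "\<gamma> \<in> couplings (chain_kernel N1 N2 t z) (beta_measure (real N1 + 1) (real N2))"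
  shows "ennreal \<bar>(\<integral>x. x \<partial>chain_kernel N1 N2 t z) - (\<integral>x. x \<partial>beta_measure (real N1 + 1) (real N2))\<bar>
         \<le> (\<integral>\<^sup>+ p. ennreal \<bar>fst p - snd p\<bar> \<partial>\<gamma>)"
proof -
  have sg[measurable_cong]: "sets \<gamma> = sets (borel \<Otimes>\<^sub>M borel)" and pg: "prob_space \<gamma>"
    and m1: "distr \<gamma> borel fst = distr (chain_kernel N1 N2 t z) borel (\<lambda>x. x)"
    and m2: "distr \<gamma> borel snd = distr (beta_measure (real N1 + 1) (real N2)) borel (\<lambda>x. x)"
    using g unfolding couplings_def by auto
  interpret prob_space \<gamma> by (rule pg)
  have sP[measurable_cong]: "sets (chain_kernel N1 N2 t z) = sets borel" by (rule sets_P[OF N1 N2])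
  have "AE x in distr (chain_kernel N1 N2 t z) borel (\<lambda>x. x). x \<in> {0..1}"
  proof (subst AE_distr_iff)
    show "AE x in chain_kernel N1 N2 t z. x \<in> {0..1}" by (rule P_support[OF N1 N2 z])
  qed auto
  then have "AE x in distr \<gamma> borel fst. x \<in> {0..1}" unfolding m1 .
  then have ae1: "AE p in \<gamma>. fst p \<in> {0..1}" by (subst (asm) AE_distr_iff) auto
  have "AE x in beta_measure (real N1 + 1) (real N2). x \<in> {0..1}"
    using AE_beta by eventually_elim auto
  then have "AE x in distr (beta_measure (real N1 + 1) (real N2)) borel (\<lambda>x. x). x \<in> {0..1}"
    by (subst AE_distr_iff) auto
  then have "AE x in distr \<gamma> borel snd. x \<in> {0..1}" unfolding m2 .
  then have ae2: "AE p in \<gamma>. snd p \<in> {0..1}" by (subst (asm) AE_distr_iff) auto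
  have b1: "AE p in \<gamma>. norm (fst p) \<le> 1" using ae1 by eventually_elim auto
  have b2: "AE p in \<gamma>. norm (snd p) \<le> 1" using ae2 by eventually_elim auto
  have i1: "integrable \<gamma> fst" by (rule integrable_const_bound[OF b1]) measurable
  have i2: "integrable \<gamma> snd" by (rule integrable_const_bound[OF b2]) measurable
  have e1: "(\<integral>p. fst p \<partial>\<gamma>) = (\<integral>x. x \<partial>chain_kernel N1 N2 t z)"
  proof -
    have "(\<integral>p. fst p \<partial>\<gamma>) = (\<integral>x. x \<partial>distr \<gamma> borel fst)"
      by (subst integral_distr) auto
    also have "\<dots> = (\<integral>x. x \<partial>chain_kernel N1 N2 t z)"
      unfolding m1 by (subst integral_distr) auto
    finally show ?thesis .
  qed
  have e2: "(\<integral>p. snd p \<partial>\<gamma>) = (\<integral>x. x \<partial>beta_measure (real N1 + 1) (real N2))"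
  proof -
    have "(\<integral>p. snd p \<partial>\<gamma>) = (\<integral>x. x \<partial>distr \<gamma> borel snd)"
      by (subst integral_distr) auto
    also have "\<dots> = (\<integral>x. x \<partial>beta_measure (real N1 + 1) (real N2))"
      unfolding m2 by (subst integral_distr) auto
    finally show ?thesis .
  qed
  have "\<bar>(\<integral>x. x \<partial>chain_kernel N1 N2 t z) - (\<integral>x. x \<partial>beta_measure (real N1 + 1) (real N2))\<bar>
      = \<bar>\<integral>p. fst p - snd p \<partial>\<gamma>\<bar>"
    using e1 e2 Bochner_Integration.integral_diff[OF i1 i2] by simp
  also have "\<dots> \<le> (\<integral>p. \<bar>fst p - snd p\<bar> \<partial>\<gamma>)"
    by (rule integral_abs_bound)
  finally have le: "\<bar>(\<integral>x. x \<partial>chain_kernel N1 N2 t z) - (\<integral>x. x \<partial>beta_measure (real N1 + 1) (real N2))\<bar>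
      \<le> (\<integral>p. \<bar>fst p - snd p\<bar> \<partial>\<gamma>)" .
  have "(\<integral>\<^sup>+ p. ennreal \<bar>fst p - snd p\<bar> \<partial>\<gamma>) = ennreal (\<integral>p. \<bar>fst p - snd p\<bar> \<partial>\<gamma>)"
    by (rule nn_integral_eq_integral) (auto intro!: integrable_abs integrable_diff i1 i2)
  then show ?thesis using le by simp
qed

lemma D_eq:
  assumes N2: "N2 > 0" and z: "z \<in> {0..1}"
  shows "(\<integral>\<^sup>+ y. ennreal \<bar>z - y\<bar> \<partial>beta_measure (real N1 + 1) (real N2))
       = ennreal (\<integral>x. \<bar>x - z\<bar> \<partial>beta_measure (real N1 + 1) (real N2))"
proof -
  interpret P: prob_space "beta_measure (real N1 + 1) (real N2)" by (rule pi_prob[OF N2])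
  have b: "AE x in beta_measure (real N1 + 1) (real N2). norm \<bar>x - z\<bar> \<le> 1"
    using AE_beta by eventually_elim (use z in auto)
  have int: "integrable (beta_measure (real N1 + 1) (real N2)) (\<lambda>x. \<bar>x - z\<bar>)"
    by (rule P.integrable_const_bound[OF b]) simp
  have "(\<integral>\<^sup>+ y. ennreal \<bar>z - y\<bar> \<partial>beta_measure (real N1 + 1) (real N2))
      = (\<integral>\<^sup>+ y. ennreal \<bar>y - z\<bar> \<partial>beta_measure (real N1 + 1) (real N2))"
    by (simp add: abs_minus_commute)
  also have "\<dots> = ennreal (\<integral>x. \<bar>x - z\<bar> \<partial>beta_measure (real N1 + 1) (real N2))"
    by (rule nn_integral_eq_integral[OF int]) auto
  finally show ?thesis .
qed

theorem mainTheorem2: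
  fixes N1 N2 :: nat and z :: real and t :: nat
  assumes "N1 > 0" and "N2 > 0" and "z \<in> {0..1}"
  shows "\<bar>(\<integral>x. x \<partial>beta_measure (real N1 + 1) (real N2)) - z\<bar>
           \<le> enn2real (wasserstein1 (chain_kernel N1 N2 t z) (beta_measure (real N1 + 1) (real N2)))
              / ((real N1 / (real N1 + 1)) * (real N2 / (real N2 + 1))) ^ t
       \<and> enn2real (wasserstein1 (chain_kernel N1 N2 t z) (beta_measure (real N1 + 1) (real N2)))
              / ((real N1 / (real N1 + 1)) * (real N2 / (real N2 + 1))) ^ t
           \<le> (\<integral>x. \<bar>x - z\<bar> \<partial>beta_measure (real N1 + 1) (real N2))"
proof -
  note N1 = assms(1) and N2 = assms(2) and z = assms(3)
  define W where "W = wasserstein1 (chain_kernel N1 N2 t z) (beta_measure (real N1 + 1) (real N2))"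
  define D where "D = (\<integral>x. \<bar>x - z\<bar> \<partial>beta_measure (real N1 + 1) (real N2))"
  define mp where "mp = (\<integral>x. x \<partial>beta_measure (real N1 + 1) (real N2))"
  define r where "r = rho N1 N2 ^ t"
  have r0: "r > 0" unfolding r_def using rho_pos[OF N1 N2] by simp
  have D0: "D \<ge> 0" unfolding D_def by simp
  have up: "W \<le> ennreal (r * D)"
  proof -
    have "W \<le> (\<integral>\<^sup>+ p. ennreal \<bar>fst p - snd p\<bar> \<partial>gam N1 N2 z t)"
      unfolding W_def wasserstein1_def by (rule INF_lower) (rule gam_coupling[OF N1 N2])
    also have "\<dots> = ennreal r * ennreal D"
      unfolding gam_cost[OF N1 N2] D_eq[OF N2 z] r_def D_def ..
    also have "\<dots> = ennreal (r * D)" using r0 D0 by (simp add: ennreal_mult)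
    finally show ?thesis .
  qed
  have low: "ennreal (r * \<bar>mp - z\<bar>) \<le> W"
    unfolding W_def wasserstein1_def
  proof (rule INF_greatest)
    fix \<gamma> assume "\<gamma> \<in> couplings (chain_kernel N1 N2 t z) (beta_measure (real N1 + 1) (real N2))"
    from coupling_lower[OF N1 N2 z this]
    have "ennreal \<bar>(\<integral>x. x \<partial>chain_kernel N1 N2 t z) - mp\<bar> \<le> (\<integral>\<^sup>+ p. ennreal \<bar>fst p - snd p\<bar> \<partial>\<gamma>)"
      unfolding mp_def .
    moreover have "\<bar>(\<integral>x. x \<partial>chain_kernel N1 N2 t z) - mp\<bar> = r * \<bar>mp - z\<bar>"
      using means_rel[OF N1 N2 z, of t] r0 unfolding mp_def[symmetric] r_def[symmetric]
      by (simp add: abs_mult abs_minus_commute)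
    ultimately show "ennreal (r * \<bar>mp - z\<bar>) \<le> (\<integral>\<^sup>+ p. ennreal \<bar>fst p - snd p\<bar> \<partial>\<gamma>)" by simp
  qed
  have Wfin: "W < top" using up by (simp add: top_unique le_less_trans)
  have "enn2real W \<le> r * D"
    using enn2real_mono[OF up] r0 D0 by simp
  moreover have "r * \<bar>mp - z\<bar> \<le> enn2real W"
    using enn2real_mono[OF low Wfin] r0 by simp
  ultimately have "\<bar>mp - z\<bar> \<le> enn2real W / r \<and> enn2real W / r \<le> D"
    using r0 by (auto simp: pos_le_divide_eq pos_divide_le_eq mult.commute)
  then show ?thesis unfolding W_def D_def mp_def r_def rho_def .
qed


end
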